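(* Let $G$ be a finitely presented residually finite group and $g_1,\ldots,g_m$ non-trivial elements of $G$. For $k\in\mathbb{N}$ let $H_k$ be the normal subgroup of $G$ generated by $g_1^k,\ldots,g_m^k$. If $rdef(G)>1$, then $rdef(G/H_k)>1$ for infinitely many natural numbers $k$.
   Context: Residual deficiency: for a finitely presented group $K$ and a finite presentation $Q=\langle X\mid R\rangle$ of $K$ with $X$ freely generating $F_n$ and $\varphi:F_n\to K$ canonical, write $R=\{u_1^{m_1},\ldots,u_s^{m_s}\}$ with $u_i$ not proper powers in $F_n$; let $R_K$ be the intersection of all finite index subgroups of $K$ and $k_i$ the order of $\varphi(u_i)R_K$ in $K/R_K$; $rdef(Q)=n-\sum 1/k_i$, and $rdef(K)$ is the supremum of $rdef(Q)$ over all finite presentations of $K$. *)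

theory Defs
  imports "HOL-Algebra.Algebra" "HOL-Library.Extended_Real"
begin

text \<open>A letter (i, False) stands for the generator x_i, (i, True) for its inverse.\<close>
type_synonym word = "(nat \<times> bool) list"

fun push :: "nat \<times> bool \<Rightarrow> word \<Rightarrow> word" where
  "push x [] = [x]"
| "push x (y # ys) = (if y = (fst x, \<not> snd x) then ys else x # y # ys)"

definition red :: "word \<Rightarrow> word" where
  "red w = foldr push w []"

definition freegrp :: "nat \<Rightarrow> word monoid" where
  "freegrp n = \<lparr> carrier = {w. set w \<subseteq> {..<n} \<times> UNIV \<and> red w = w},
                 monoid.mult = (\<lambda>a b. red (a @ b)), monoid.one = [] \<rparr>"

definition word_eval :: "('g, 'b) monoid_scheme \<Rightarrow> (nat \<Rightarrow> 'g) \<Rightarrow> word \<Rightarrow> 'g" where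
  "word_eval K a w =
     foldr (\<lambda>(i, b) acc. (if b then inv\<^bsub>K\<^esub> (a i) else a i) \<otimes>\<^bsub>K\<^esub> acc) w \<one>\<^bsub>K\<^esub>"

definition normal_closure :: "('g, 'b) monoid_scheme \<Rightarrow> 'g set \<Rightarrow> 'g set" where
  "normal_closure K S =
     generate K (\<Union>g\<in>carrier K. (\<lambda>s. g \<otimes>\<^bsub>K\<^esub> s \<otimes>\<^bsub>K\<^esub> inv\<^bsub>K\<^esub> g) ` S)"

definition proper_power :: "('g, 'b) monoid_scheme \<Rightarrow> 'g \<Rightarrow> bool" where
  "proper_power K u \<longleftrightarrow> (\<exists>v\<in>carrier K. \<exists>k::nat. k \<ge> 2 \<and> u = v [^]\<^bsub>K\<^esub> k)"

definition fin_res :: "('g, 'b) monoid_scheme \<Rightarrow> 'g set" where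
  "fin_res K = carrier K \<inter> \<Inter> {H. subgroup H K \<and> finite (rcosets\<^bsub>K\<^esub> H)}"

definition residually_finite :: "('g, 'b) monoid_scheme \<Rightarrow> bool" where
  "residually_finite K \<longleftrightarrow> fin_res K = {\<one>\<^bsub>K\<^esub>}"

text \<open>(n, a, R) is a finite presentation of K: Q = < x_0..x_(n-1) | R >, with the
  canonical map phi : F_n -> K given by x_i |-> a i, which is onto and has kernel the
  normal closure of R; i.e. F_n / <<R>> is identified with K via phi.\<close>
definition fin_pres :: "('g, 'b) monoid_scheme \<Rightarrow> nat \<Rightarrow> (nat \<Rightarrow> 'g) \<Rightarrow> word set \<Rightarrow> bool" where
  "fin_pres K n a R \<longleftrightarrow>
     (\<forall>i<n. a i \<in> carrier K) \<and>
     finite R \<and> R \<subseteq> carrier (freegrp n) \<and> [] \<notin> R \<and>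
     word_eval K a ` carrier (freegrp n) = carrier K \<and>
     kernel (freegrp n) K (word_eval K a) = normal_closure (freegrp n) R"

definition finitely_presented :: "('g, 'b) monoid_scheme \<Rightarrow> bool" where
  "finitely_presented K \<longleftrightarrow> (\<exists>n a R. fin_pres K n a R)"

text \<open>The root of a relator r: the (unique) u in F_n, not a proper power, with
  r = u^m for some m >= 1.\<close>
definition froot :: "nat \<Rightarrow> word \<Rightarrow> word" where
  "froot n r = (SOME u. u \<in> carrier (freegrp n) \<and> \<not> proper_power (freegrp n) u \<and>
                      (\<exists>m::nat. m \<ge> 1 \<and> r = u [^]\<^bsub>freegrp n\<^esub> m))"

text \<open>k_i = order of phi(u_i) R_K in K / R_K; infinite order (ord = 0) gives 1/k_i = 0.\<close>
definition rdef_pres :: "('g, 'b) monoid_scheme \<Rightarrow> nat \<Rightarrow> (nat \<Rightarrow> 'g) \<Rightarrow> word set \<Rightarrow> real" where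
  "rdef_pres K n a R =
     real n - (\<Sum>r\<in>R. let k = group.ord (K Mod fin_res K)
                                  (fin_res K #>\<^bsub>K\<^esub> word_eval K a (froot n r))
                       in if k = 0 then 0 else 1 / real k)"

definition rdef :: "('g, 'b) monoid_scheme \<Rightarrow> ereal" where
  "rdef K = (SUP p \<in> {(n, a, R). fin_pres K n a R}.
               ereal (case p of (n, a, R) \<Rightarrow> rdef_pres K n a R))"

end

theory Submission
  imports Defs "HOL-Library.Infinite_Set"
begin

definition flip :: "nat \<times> bool \<Rightarrow> nat \<times> bool" where
  "flip x = (fst x, \<not> snd x)"

lemma flip_flip[simp]: "flip (flip x) = x" by (cases x) (simp add: flip_def)
lemma flip_neq[simp]: "flip x \<noteq> x" "x \<noteq> flip x" by (cases x, simp add: flip_def)+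
lemma flip_inj[simp]: "flip x = flip y \<longleftrightarrow> x = y" by (metis flip_flip)

definition finv :: "word \<Rightarrow> word" where
  "finv w = rev (map flip w)"

lemma finv_finv[simp]: "finv (finv w) = w" by (simp add: finv_def rev_map comp_def)
lemma finv_append[simp]: "finv (a @ b) = finv b @ finv a" by (simp add: finv_def)
lemma finv_Nil[simp]: "finv [] = []" by (simp add: finv_def)
lemma finv_Cons: "finv (x # w) = finv w @ [flip x]" by (simp add: finv_def)
lemma length_finv[simp]: "length (finv w) = length w" by (simp add: finv_def)
lemma set_finv: "set (finv w) = flip ` set w" by (simp add: finv_def)

fun reduced :: "word \<Rightarrow> bool" where
  "reduced (x # y # ys) = (y \<noteq> flip x \<and> reduced (y # ys))"
| "reduced _ = True"

lemma push_eq: "push x v = (if v \<noteq> [] \<and> hd v = flip x then tl v else x # v)"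
  by (cases v) (auto simp: flip_def)

lemma reduced_Cons: "reduced (x # v) \<longleftrightarrow> reduced v \<and> (v \<noteq> [] \<longrightarrow> hd v \<noteq> flip x)"
  by (cases v) auto

lemma reduced_tl: "reduced v \<Longrightarrow> reduced (tl v)"
  by (cases v) (auto simp: reduced_Cons)

lemma reduced_push: "reduced v \<Longrightarrow> reduced (push x v)"
  by (auto simp: push_eq reduced_Cons reduced_tl)

lemma reduced_foldr_push: "reduced v \<Longrightarrow> reduced (foldr push xs v)"
  by (induction xs) (auto intro: reduced_push)

lemma red_Nil[simp]: "red [] = []" by (simp add: red_def)
lemma red_Cons: "red (x # w) = push x (red w)" by (simp add: red_def)

lemma reduced_red: "reduced (red w)"
  unfolding red_def by (rule reduced_foldr_push) simp

lemma red_id: "reduced w \<Longrightarrow> red w = w"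
proof (induction w)
  case (Cons x w)
  then show ?case by (auto simp: red_Cons reduced_Cons push_eq)
qed simp

lemma red_fix_iff: "red w = w \<longleftrightarrow> reduced w"
  by (metis red_id reduced_red)

lemma red_red[simp]: "red (red w) = red w"
  by (simp add: red_id reduced_red)

lemma red_append: "red (a @ b) = foldr push a (red b)"
  by (simp add: red_def)

lemma push_cancel: "reduced v \<Longrightarrow> push (flip x) (push x v) = v"
  by (cases v) (auto simp: push_eq reduced_Cons)

lemma foldr_push_push:
  assumes "reduced r" "reduced v"
  shows "foldr push (push x r) v = push x (foldr push r v)"
proof (cases "r \<noteq> [] \<and> hd r = flip x")
  case True
  then obtain r' where r: "r = flip x # r'" by (cases r) auto
  have "reduced (foldr push r' v)" using assms reduced_foldr_push by blast
  then have "push x (push (flip x) (foldr push r' v)) = foldr push r' v"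
    using push_cancel[of _ "flip x"] by simp
  then show ?thesis using r by (simp add: push_eq)
next
  case False
  then have "push x r = x # r" by (auto simp: push_eq)
  then show ?thesis by simp
qed

lemma foldr_push_red: "reduced v \<Longrightarrow> foldr push (red a) v = foldr push a v"
proof (induction a)
  case (Cons x a)
  then show ?case
    by (simp add: red_Cons foldr_push_push reduced_red)
qed simp

lemma red_left: "red (red a @ b) = red (a @ b)"
  by (simp add: red_append foldr_push_red reduced_red)

lemma red_right: "red (a @ red b) = red (a @ b)"
  by (simp add: red_append)

lemma foldr_push_finv_cancel: "reduced v \<Longrightarrow> foldr push (finv c @ c) v = v"
proof (induction c arbitrary: v)
  case (Cons x c)
  have r: "reduced (foldr push c v)" using Cons reduced_foldr_push by blast
  have "foldr push (finv (x # c) @ x # c) v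
      = foldr push (finv c) (push (flip x) (push x (foldr push c v)))"
    by (simp add: finv_Cons)
  also have "\<dots> = foldr push (finv c) (foldr push c v)" using push_cancel[OF r] by simp
  also have "\<dots> = v" using Cons by simp
  finally show ?case .
qed simp

lemma foldr_push_finv_cancel': "reduced v \<Longrightarrow> foldr push (c @ finv c) v = v"
  using foldr_push_finv_cancel[of v "finv c"] by simp

lemma red_cancel_mid: "red (a @ finv c @ c @ b) = red (a @ b)"
  by (simp add: red_append foldr_push_finv_cancel[OF reduced_red, of c b, simplified])

lemma red_cancel_mid': "red (a @ c @ finv c @ b) = red (a @ b)"
  using red_cancel_mid[of a "finv c" b] by simp

lemma set_push: "set (push x v) \<subseteq> insert x (set v)"
  by (cases v) (auto simp: push_eq dest: list.set_sel(2))

lemma set_red: "set (red w) \<subseteq> set w"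
  by (induction w) (auto simp: red_Cons dest!: set_push[THEN subsetD])

lemma reduced_append:
  "reduced (a @ b) \<longleftrightarrow> reduced a \<and> reduced b \<and> (a \<noteq> [] \<longrightarrow> b \<noteq> [] \<longrightarrow> hd b \<noteq> flip (last a))"
proof (induction a)
  case (Cons x a)
  then show ?case by (cases a) (auto simp: reduced_Cons)
qed simp

lemma reduced_finv: "reduced w \<Longrightarrow> reduced (finv w)"
proof (induction w)
  case (Cons x w)
  then show ?case
    by (cases w) (auto simp: finv_Cons reduced_append reduced_Cons finv_def hd_rev last_map)
qed simp


abbreviation ltr :: "nat \<Rightarrow> (nat \<times> bool) set" where
  "ltr n \<equiv> {..<n} \<times> UNIV"

lemma carrier_freegrp: "w \<in> carrier (freegrp n) \<longleftrightarrow> set w \<subseteq> ltr n \<and> reduced w"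
  by (simp add: freegrp_def red_fix_iff)

lemma mult_freegrp[simp]: "x \<otimes>\<^bsub>freegrp n\<^esub> y = red (x @ y)"
  by (simp add: freegrp_def)

lemma one_freegrp[simp]: "\<one>\<^bsub>freegrp n\<^esub> = []"
  by (simp add: freegrp_def)

lemma flip_ltr: "x \<in> ltr n \<Longrightarrow> flip x \<in> ltr n"
  by (cases x) (auto simp: flip_def)

lemma set_finv_ltr: "set w \<subseteq> ltr n \<Longrightarrow> set (finv w) \<subseteq> ltr n"
  by (auto simp: set_finv flip_def)

lemma red_closed: "set w \<subseteq> ltr n \<Longrightarrow> red w \<in> carrier (freegrp n)"
  using set_red[of w] by (auto simp: carrier_freegrp reduced_red)

lemma group_freegrp: "group (freegrp n)"
proof (rule groupI)
  fix x y assume "x \<in> carrier (freegrp n)" "y \<in> carrier (freegrp n)"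
  then show "x \<otimes>\<^bsub>freegrp n\<^esub> y \<in> carrier (freegrp n)"
    using red_closed[of "x @ y" n] by (auto simp: carrier_freegrp)
next
  show "\<one>\<^bsub>freegrp n\<^esub> \<in> carrier (freegrp n)" by (simp add: carrier_freegrp)
next
  fix x y z assume "x \<in> carrier (freegrp n)" "y \<in> carrier (freegrp n)" "z \<in> carrier (freegrp n)"
  show "x \<otimes>\<^bsub>freegrp n\<^esub> y \<otimes>\<^bsub>freegrp n\<^esub> z = x \<otimes>\<^bsub>freegrp n\<^esub> (y \<otimes>\<^bsub>freegrp n\<^esub> z)"
    by (simp add: red_left red_right)
next
  fix x assume "x \<in> carrier (freegrp n)"
  then show "\<one>\<^bsub>freegrp n\<^esub> \<otimes>\<^bsub>freegrp n\<^esub> x = x" by (simp add: carrier_freegrp red_id)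
next
  fix x assume x: "x \<in> carrier (freegrp n)"
  show "\<exists>y\<in>carrier (freegrp n). y \<otimes>\<^bsub>freegrp n\<^esub> x = \<one>\<^bsub>freegrp n\<^esub>"
  proof (intro bexI)
    show "finv x \<otimes>\<^bsub>freegrp n\<^esub> x = \<one>\<^bsub>freegrp n\<^esub>"
      using red_cancel_mid[of "[]" x "[]"] by simp
    show "finv x \<in> carrier (freegrp n)"
      using x by (simp add: carrier_freegrp set_finv_ltr reduced_finv)
  qed
qed

interpretation F: group "freegrp n" by (rule group_freegrp)

lemma inv_freegrp: "x \<in> carrier (freegrp n) \<Longrightarrow> inv\<^bsub>freegrp n\<^esub> x = finv x"
  apply (rule F.inv_equality)
  using red_cancel_mid[of "[]" x "[]"] by (auto simp: carrier_freegrp set_finv_ltr reduced_finv)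

definition lval :: "('g, 'b) monoid_scheme \<Rightarrow> (nat \<Rightarrow> 'g) \<Rightarrow> nat \<times> bool \<Rightarrow> 'g" where
  "lval K a x = (if snd x then inv\<^bsub>K\<^esub> (a (fst x)) else a (fst x))"

lemma word_eval_Nil[simp]: "word_eval K a [] = \<one>\<^bsub>K\<^esub>"
  by (simp add: word_eval_def)

lemma word_eval_Cons: "word_eval K a (x # w) = lval K a x \<otimes>\<^bsub>K\<^esub> word_eval K a w"
  by (cases x) (simp add: word_eval_def lval_def)

context group begin

lemma lval_closed: "a (fst x) \<in> carrier G \<Longrightarrow> lval G a x \<in> carrier G"
  by (simp add: lval_def)

lemma lval_flip: "a (fst x) \<in> carrier G \<Longrightarrow> lval G a (flip x) = inv (lval G a x)"
  by (cases x) (auto simp: lval_def flip_def)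

lemma word_eval_closed: "(\<And>x. x \<in> set w \<Longrightarrow> a (fst x) \<in> carrier G) \<Longrightarrow> word_eval G a w \<in> carrier G"
  by (induction w) (auto simp: word_eval_Cons lval_closed)

lemma word_eval_append:
  "(\<And>x. x \<in> set u \<Longrightarrow> a (fst x) \<in> carrier G) \<Longrightarrow> (\<And>x. x \<in> set w \<Longrightarrow> a (fst x) \<in> carrier G) \<Longrightarrow>
   word_eval G a (u @ w) = word_eval G a u \<otimes> word_eval G a w"
  by (induction u) (auto simp: word_eval_Cons lval_closed word_eval_closed m_assoc)

lemma word_eval_push:
  assumes "\<And>y. y \<in> set (x # v) \<Longrightarrow> a (fst y) \<in> carrier G"
  shows "word_eval G a (push x v) = word_eval G a (x # v)"
proof (cases v)
  case (Cons y v')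
  show ?thesis
  proof (cases "y = flip x")
    case True
    have "a (fst x) \<in> carrier G" using assms by auto
    then show ?thesis using Cons True assms
      by (simp add: word_eval_Cons lval_flip lval_closed word_eval_closed m_assoc[symmetric])
  next
    case False
    then show ?thesis using Cons by (cases x) (auto simp: flip_def)
  qed
qed simp

lemma word_eval_red:
  "(\<And>x. x \<in> set w \<Longrightarrow> a (fst x) \<in> carrier G) \<Longrightarrow> word_eval G a (red w) = word_eval G a w"
proof (induction w)
  case (Cons x w)
  have "word_eval G a (red (x # w)) = word_eval G a (push x (red w))" by (simp add: red_Cons)
  also have "\<dots> = word_eval G a (x # red w)"
    using Cons.prems set_red[of w] by (intro word_eval_push) auto
  also have "\<dots> = word_eval G a (x # w)" using Cons by (simp add: word_eval_Cons)
  finally show ?case .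
qed simp

lemma word_eval_hom:
  assumes "\<forall>i<n. a i \<in> carrier G"
  shows "group_hom (freegrp n) G (word_eval G a)"
proof -
  have c: "a (fst x) \<in> carrier G" if "x \<in> set w" "w \<in> carrier (freegrp n)" for x w
    using that assms by (auto simp: carrier_freegrp)
  show ?thesis
    unfolding group_hom_def group_hom_axioms_def
  proof (intro conjI group_freegrp is_group)
    show "word_eval G a \<in> hom (freegrp n) G"
      unfolding hom_def
    proof (intro CollectI conjI ballI)
      show "word_eval G a \<in> carrier (freegrp n) \<rightarrow> carrier G"
        using c by (auto intro: word_eval_closed)
      fix x y assume x: "x \<in> carrier (freegrp n)" and y: "y \<in> carrier (freegrp n)"
      have "word_eval G a (red (x @ y)) = word_eval G a (x @ y)"
        using c[OF _ x] c[OF _ y] by (intro word_eval_red) auto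
      also have "\<dots> = word_eval G a x \<otimes> word_eval G a y"
        using c[OF _ x] c[OF _ y] by (intro word_eval_append) auto
      finally show "word_eval G a (x \<otimes>\<^bsub>freegrp n\<^esub> y) = word_eval G a x \<otimes> word_eval G a y"
        by simp
    qed
  qed
qed

end


definition pw :: "'a list \<Rightarrow> nat \<Rightarrow> 'a list" where
  "pw v j = concat (replicate j v)"

lemma pw_0[simp]: "pw v 0 = []" by (simp add: pw_def)
lemma pw_Suc: "pw v (Suc j) = v @ pw v j" by (simp add: pw_def)
lemma pw_Suc': "pw v (Suc j) = pw v j @ v"
  by (induction j) (simp_all add: pw_def)
lemma pw_add: "pw v (i + j) = pw v i @ pw v j"
  by (induction i) (simp_all add: pw_Suc)
lemma length_pw[simp]: "length (pw v j) = j * length v"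
  by (induction j) (simp_all add: pw_Suc)
lemma hd_pw: "v \<noteq> [] \<Longrightarrow> j \<ge> 1 \<Longrightarrow> hd (pw v j) = hd v"
  by (cases j) (simp_all add: pw_Suc)
lemma last_pw: "v \<noteq> [] \<Longrightarrow> j \<ge> 1 \<Longrightarrow> last (pw v j) = last v"
  by (cases j) (simp_all add: pw_Suc')
lemma pw_ne: "v \<noteq> [] \<Longrightarrow> j \<ge> 1 \<Longrightarrow> pw v j \<noteq> []"
  by (cases j) (simp_all add: pw_Suc)
lemma set_pw: "set (pw v j) \<subseteq> set v"
  by (induction j) (auto simp: pw_Suc)
lemma pw_mult: "pw (pw v i) j = pw v (i * j)"
  by (induction j) (simp_all add: pw_Suc pw_add)

subsection \<open>Combinatorics on words\<close>

lemma comm_words: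
  "x @ y = y @ x \<Longrightarrow> \<exists>t p q. x = pw t p \<and> y = pw t q"
proof (induction "length x + length y" arbitrary: x y rule: less_induct)
  case less
  show ?case
  proof (cases "x = [] \<or> y = []")
    case True
    then show ?thesis
      by (metis One_nat_def append.right_neutral pw_0 pw_Suc)
  next
    case False
    show ?thesis
    proof (cases "length x \<le> length y")
      case True
      then have "take (length x) (x @ y) = take (length x) (y @ x)" using less.prems by simp
      then have "x = take (length x) y" using True by simp
      then obtain y' where y: "y = x @ y'" by (metis append_take_drop_id)
      have "x @ y' = y' @ x" using less.prems y by simp
      moreover have "length x + length y' < length x + length y" using y False by simp
      ultimately obtain t p q where "x = pw t p" "y' = pw t q" using less.hyps by blast
      then have "x = pw t p \<and> y = pw t (p + q)" using y by (simp add: pw_add)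
      then show ?thesis by blast
    next
      case False': False
      then have "take (length y) (x @ y) = take (length y) (y @ x)" using less.prems by simp
      then have "y = take (length y) x" using False' by simp
      then obtain x' where x: "x = y @ x'" by (metis append_take_drop_id)
      have "y @ x' = x' @ y" using less.prems x by simp
      moreover have "length y + length x' < length x + length y" using x False by simp
      ultimately obtain t p q where "y = pw t p" "x' = pw t q"
        using less.hyps[of y x'] by auto
      then have "x = pw t (p + q) \<and> y = pw t p" using x by (simp add: pw_add)
      then show ?thesis by blast
    qed
  qed
qed

lemma pw_comm: "v @ pw v j = pw v j @ v"
  by (metis pw_Suc pw_Suc')

lemma pw_eq_comm:
  assumes "pw u j = pw w k" "j \<ge> 1" "k \<ge> 1"
  shows "u @ w = w @ u"
proof (cases "j = 1 \<or> k = 1")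
  case True
  then show ?thesis
  proof
    assume "j = 1"
    then have "u = pw w k" using assms by (simp add: pw_Suc)
    then show ?thesis by (simp add: pw_comm)
  next
    assume "k = 1"
    then have "w = pw u j" using assms by (simp add: pw_Suc)
    then show ?thesis by (simp add: pw_comm)
  qed
next
  case False
  define z where "z = pw u j"
  have lz: "length u + length w \<le> length z"
  proof -
    have "length (pw u j) = length (pw w k)" using assms(1) by simp
    then have "length z = j * length u" "length z = k * length w" by (auto simp: z_def)
    moreover have "j \<ge> 2" "k \<ge> 2" using False assms by auto
    ultimately have "length z \<ge> 2 * length u" "length z \<ge> 2 * length w"
      by (metis mult_le_mono1)+
    then show ?thesis by linarith
  qed
  have uz: "u @ z = z @ u" by (simp add: z_def pw_comm)
  have wz: "w @ z = z @ w" using assms by (simp add: z_def pw_comm)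
  obtain j' where j': "j = Suc j'" using assms by (cases j) auto
  obtain k' where k': "k = Suc k'" using assms by (cases k) auto
  have zu: "z = u @ pw u j'" by (simp add: z_def j' pw_Suc)
  have zw: "z = w @ pw w k'" using assms by (simp add: z_def k' pw_Suc)
  have "u @ w = take (length u + length w) (u @ z)" by (simp add: zw)
  also have "\<dots> = take (length u + length w) z" using uz lz by simp
  also have "\<dots> = take (length u + length w) (w @ z)" using wz lz by simp
  also have "\<dots> = w @ u" by (simp add: zu)
  finally show ?thesis .
qed

lemma pw_eq_root:
  assumes "pw u j = pw w k" "j \<ge> 1" "k \<ge> 1"
  shows "\<exists>t p q. u = pw t p \<and> w = pw t q"
  using comm_words pw_eq_comm[OF assms] by blast

subsection \<open>Cyclic reduction\<close>

definition cred :: "word \<Rightarrow> bool" where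
  "cred v \<longleftrightarrow> reduced v \<and> v \<noteq> [] \<and> hd v \<noteq> flip (last v)"

lemma reduced_prefix: "reduced (a @ b) \<Longrightarrow> reduced a"
  by (simp add: reduced_append)

lemma reduced_suffix: "reduced (a @ b) \<Longrightarrow> reduced b"
  by (simp add: reduced_append)

lemma decomp:
  "reduced w \<Longrightarrow> w \<noteq> [] \<Longrightarrow> \<exists>c v. w = c @ v @ finv c \<and> cred v"
proof (induction "length w" arbitrary: w rule: less_induct)
  case less
  show ?case
  proof (cases "hd w = flip (last w)")
    case False
    then show ?thesis using less.prems by (intro exI[of _ "[]"] exI[of _ w]) (auto simp: cred_def)
  next
    case True
    have "length w \<noteq> 1"
    proof
      assume "length w = 1"
      then obtain x where "w = [x]" by (cases w) auto
      then show False using True by simp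
    qed
    then obtain x m y where w: "w = x # m @ [y]" using less.prems
      by (metis append_butlast_last_id butlast.simps(2) length_Cons list.exhaust list.size(3) One_nat_def)
    have y: "y = flip x" using True w by simp
    have "m \<noteq> []" using less.prems w y by auto
    have rm: "reduced m" using less.prems(1) w
      by (metis append_Cons reduced_Cons reduced_prefix)
    obtain c v where m: "m = c @ v @ finv c" "cred v"
      using less.hyps[of m] \<open>m \<noteq> []\<close> rm w by auto
    have "w = (x # c) @ v @ finv (x # c)" using w y m by (simp add: finv_Cons)
    then show ?thesis using m by blast
  qed
qed

lemma reduced_replace_mid:
  assumes "reduced (c @ v @ d)" "v \<noteq> []" "v' \<noteq> []" "reduced v'" "hd v' = hd v" "last v' = last v"
  shows "reduced (c @ v' @ d)"
  using assms by (auto simp: reduced_append)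

lemma reduced_pw: "cred v \<Longrightarrow> reduced (pw v j)"
proof (induction j)
  case (Suc j)
  then show ?case
    by (cases j) (auto simp: pw_Suc reduced_append hd_pw cred_def)
qed simp

lemma cred_pw: "cred v \<Longrightarrow> j \<ge> 1 \<Longrightarrow> cred (pw v j)"
  using reduced_pw[of v j] by (auto simp: cred_def hd_pw last_pw pw_ne)

lemma freegrp_pow:
  assumes w: "w = c @ v @ finv c" "cred v" "w \<in> carrier (freegrp n)"
  shows "w [^]\<^bsub>freegrp n\<^esub> (Suc j) = c @ pw v (Suc j) @ finv c"
proof (induction j)
  case 0
  have "w [^]\<^bsub>freegrp n\<^esub> (Suc 0) = w" using w(3) by (simp add: carrier_freegrp red_id)
  then show ?case using w by (simp add: pw_Suc)
next
  case (Suc j)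
  have r: "reduced w" using w(3) by (simp add: carrier_freegrp)
  have "w [^]\<^bsub>freegrp n\<^esub> (Suc (Suc j)) = red ((c @ pw v (Suc j) @ finv c) @ (c @ v @ finv c))"
    using Suc w by simp
  also have "\<dots> = red ((c @ pw v (Suc j)) @ finv c @ c @ (v @ finv c))" by simp
  also have "\<dots> = red (c @ pw v (Suc (Suc j)) @ finv c)"
    by (subst red_cancel_mid) (simp add: pw_Suc')
  also have "\<dots> = c @ pw v (Suc (Suc j)) @ finv c"
  proof (rule red_id, rule reduced_replace_mid[of c v])
    show "reduced (c @ v @ finv c)" using r w by simp
    show "v \<noteq> []" "reduced (pw v (Suc (Suc j)))" using w(2) reduced_pw by (auto simp: cred_def)
    show "pw v (Suc (Suc j)) \<noteq> []" "hd (pw v (Suc (Suc j))) = hd v" "last (pw v (Suc (Suc j))) = last v"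
      using w(2) by (auto simp: cred_def hd_pw last_pw pw_ne)
  qed
  finally show ?case .
qed

lemma set_sub_carrier: "w = c @ v @ finv c \<Longrightarrow> set c \<subseteq> set w \<and> set v \<subseteq> set w"
  by auto

lemma freegrp_pow_length:
  assumes "w = c @ v @ finv c" "cred v" "w \<in> carrier (freegrp n)"
  shows "length (w [^]\<^bsub>freegrp n\<^esub> (Suc j)) = 2 * length c + Suc j * length v"
  using freegrp_pow[OF assms] by simp

lemma pow_Nil: "[] [^]\<^bsub>freegrp n\<^esub> (j::nat) = []"
  using F.nat_pow_one[of n j] by simp

lemma root_exists:
  "w \<in> carrier (freegrp n) \<Longrightarrow> w \<noteq> [] \<Longrightarrow>
   \<exists>\<rho> s. \<rho> \<in> carrier (freegrp n) \<and> \<not> proper_power (freegrp n) \<rho> \<and> (s::nat) \<ge> 1 \<and> w = \<rho> [^]\<^bsub>freegrp n\<^esub> s"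
proof (induction "length w" arbitrary: w rule: less_induct)
  case less
  show ?case
  proof (cases "proper_power (freegrp n) w")
    case False
    then show ?thesis using less.prems
    proof -
      have "w [^]\<^bsub>freegrp n\<^esub> (1::nat) = w" using less.prems by (simp add: carrier_freegrp red_id)
      then show ?thesis using False less.prems by (metis order_refl)
    qed
  next
    case True
    then obtain v t where v: "v \<in> carrier (freegrp n)" "t \<ge> 2" "w = v [^]\<^bsub>freegrp n\<^esub> (t::nat)"
      unfolding proper_power_def by blast
    have "v \<noteq> []" using v less.prems pow_Nil by metis
    then obtain c u where cu: "v = c @ u @ finv c" "cred u"
      using decomp[of v] v(1) by (auto simp: carrier_freegrp)
    obtain t' where t': "t = Suc t'" using v(2) by (cases t) auto
    have "length w = 2 * length c + t * length u"
      using freegrp_pow_length[OF cu v(1), of t'] by (simp only: v(3) t')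
    moreover have "length u > 0" using cu by (auto simp: cred_def)
    moreover have "length v = 2 * length c + length u" using cu by simp
    moreover have "length u < t * length u" using \<open>length u > 0\<close> v(2) by simp
    ultimately have "length v < length w" by linarith
    then obtain \<rho> s where \<rho>: "\<rho> \<in> carrier (freegrp n)" "\<not> proper_power (freegrp n) \<rho>" "(s::nat) \<ge> 1"
      "v = \<rho> [^]\<^bsub>freegrp n\<^esub> s"
      using less.hyps[of v] v(1) \<open>v \<noteq> []\<close> by blast
    have "w = \<rho> [^]\<^bsub>freegrp n\<^esub> (s * t)" using \<rho> v by (simp add: F.nat_pow_pow)
    moreover have "s * t \<ge> 1" using \<rho>(3) v(2) by simp
    ultimately show ?thesis using \<rho> by blast
  qed
qed

lemma conj_unique:
  assumes eq: "c @ A @ finv c = d @ B @ finv d"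
    and A: "A \<noteq> []" "hd A \<noteq> flip (last A)" and B: "B \<noteq> []" "hd B \<noteq> flip (last B)"
  shows "c = d"
proof -
  have main: "c = d" if eq: "c @ A @ finv c = d @ B @ finv d" and A: "A \<noteq> []" "hd A \<noteq> flip (last A)"
      and le: "length c \<le> length d" for c d A B
  proof -
    have "take (length c) (c @ A @ finv c) = take (length c) (d @ B @ finv d)" using eq by simp
    then have "c = take (length c) d" using le by simp
    then obtain e where d: "d = c @ e" by (metis append_take_drop_id)
    have "A @ finv c = e @ B @ finv e @ finv c" using eq d by simp
    then have Xe: "A = e @ B @ finv e" by simp
    show ?thesis
    proof (cases e)
      case Nil then show ?thesis using d by simp
    next
      case (Cons x e')
      have "hd A = x" using Xe Cons by simp
      moreover have "last A = flip x" using Xe Cons by (simp add: finv_Cons)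
      ultimately show ?thesis using A by simp
    qed
  qed
  show ?thesis
  proof (cases "length c \<le> length d")
    case True then show ?thesis using main[OF eq A] by blast
  next
    case False then show ?thesis using main[OF eq[symmetric] B] by simp
  qed
qed

lemma common_root:
  assumes u: "u \<in> carrier (freegrp n)" "u \<noteq> []" and w: "w \<in> carrier (freegrp n)" "w \<noteq> []"
    and j: "j \<ge> 1" and k: "k \<ge> 1"
    and eq: "u [^]\<^bsub>freegrp n\<^esub> (j::nat) = w [^]\<^bsub>freegrp n\<^esub> (k::nat)"
  shows "\<exists>t p q. t \<in> carrier (freegrp n) \<and> p \<ge> 1 \<and> q \<ge> 1 \<and>
           u = t [^]\<^bsub>freegrp n\<^esub> (p::nat) \<and> w = t [^]\<^bsub>freegrp n\<^esub> (q::nat)"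
proof -
  have "reduced u" "reduced w" using u w by (auto simp: carrier_freegrp)
  obtain c u' where cu: "u = c @ u' @ finv c" "cred u'"
    using decomp[OF \<open>reduced u\<close> u(2)] by blast
  obtain d w' where dw: "w = d @ w' @ finv d" "cred w'"
    using decomp[OF \<open>reduced w\<close> w(2)] by blast
  obtain j' where j': "j = Suc j'" using j by (cases j) auto
  obtain k' where k': "k = Suc k'" using k by (cases k) auto
  have e: "c @ pw u' j @ finv c = d @ pw w' k @ finv d"
    using eq freegrp_pow[OF cu u(1), of j'] freegrp_pow[OF dw w(1), of k'] j' k' by simp
  have "c = d"
    by (rule conj_unique[OF e]) (use cred_pw[OF cu(2) j] cred_pw[OF dw(2) k] in \<open>auto simp: cred_def\<close>)
  then have "pw u' j = pw w' k" using e by simp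
  then obtain t p q where tpq: "u' = pw t p" "w' = pw t q" using pw_eq_root j k by blast
  have "t \<noteq> []" using tpq cu(2) by (auto simp: cred_def pw_def)
  have "p \<ge> 1" using tpq cu(2) by (cases p) (auto simp: cred_def)
  have "q \<ge> 1" using tpq dw(2) by (cases q) (auto simp: cred_def)
  have ht: "hd t = hd u'" "last t = last u'" using tpq \<open>t \<noteq> []\<close> \<open>p \<ge> 1\<close> by (auto simp: hd_pw last_pw)
  obtain p' where p': "p = Suc p'" using \<open>p \<ge> 1\<close> by (cases p) auto
  have rt: "reduced t" using cu(2) tpq p' by (auto simp: cred_def pw_Suc dest: reduced_prefix)
  have credt: "cred t" using rt \<open>t \<noteq> []\<close> ht cu(2) by (simp add: cred_def)
  define T where "T = c @ t @ finv c"
  have "reduced T"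
    unfolding T_def
    by (rule reduced_replace_mid[of c u']) (use u cu rt ht \<open>t \<noteq> []\<close> in \<open>auto simp: carrier_freegrp cred_def\<close>)
  moreover have "set T \<subseteq> ltr n"
    using u cu tpq set_pw[of t p] p' by (auto simp: T_def carrier_freegrp set_finv_ltr pw_Suc)
  ultimately have T: "T \<in> carrier (freegrp n)" by (simp add: carrier_freegrp)
  obtain q' where q': "q = Suc q'" using \<open>q \<ge> 1\<close> by (cases q) auto
  have "T [^]\<^bsub>freegrp n\<^esub> p = u"
    using freegrp_pow[OF T_def credt T, of p'] p' tpq cu by simp
  moreover have "T [^]\<^bsub>freegrp n\<^esub> q = w"
    using freegrp_pow[OF T_def credt T, of q'] q' tpq dw \<open>c = d\<close> by simp
  ultimately show ?thesis using T \<open>p \<ge> 1\<close> \<open>q \<ge> 1\<close> by metis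
qed

lemma froot_props:
  assumes "r \<in> carrier (freegrp n)" "r \<noteq> []"
  shows "froot n r \<in> carrier (freegrp n) \<and> \<not> proper_power (freegrp n) (froot n r) \<and>
         (\<exists>m::nat. m \<ge> 1 \<and> r = froot n r [^]\<^bsub>freegrp n\<^esub> m)"
proof -
  obtain \<rho> s where "\<rho> \<in> carrier (freegrp n)" "\<not> proper_power (freegrp n) \<rho>" "(s::nat) \<ge> 1"
    "r = \<rho> [^]\<^bsub>freegrp n\<^esub> s"
    using root_exists[OF assms] by blast
  then have ex: "\<exists>u. u \<in> carrier (freegrp n) \<and> \<not> proper_power (freegrp n) u \<and>
                      (\<exists>m::nat. m \<ge> 1 \<and> r = u [^]\<^bsub>freegrp n\<^esub> m)" by blast
  show ?thesis
    unfolding froot_def by (rule someI_ex[OF ex])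
qed

lemma Nil_proper_power: "proper_power (freegrp n) []"
  unfolding proper_power_def
  by (rule bexI[of _ "[]"]) (auto simp: pow_Nil carrier_freegrp intro!: exI[of _ 2])

lemma froot_power:
  assumes w: "w \<in> carrier (freegrp n)" and k: "k \<ge> 1"
    and ne: "w [^]\<^bsub>freegrp n\<^esub> (k::nat) \<noteq> []"
  shows "\<exists>q::nat. q \<ge> 1 \<and> w = froot n (w [^]\<^bsub>freegrp n\<^esub> k) [^]\<^bsub>freegrp n\<^esub> q"
proof -
  define u where "u = froot n (w [^]\<^bsub>freegrp n\<^esub> k)"
  have wk: "w [^]\<^bsub>freegrp n\<^esub> k \<in> carrier (freegrp n)" using w by simp
  obtain m :: nat where u: "u \<in> carrier (freegrp n)" "\<not> proper_power (freegrp n) u" "m \<ge> 1"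
      "w [^]\<^bsub>freegrp n\<^esub> k = u [^]\<^bsub>freegrp n\<^esub> m"
    using froot_props[OF wk ne] unfolding u_def by blast
  have "u \<noteq> []" using u(2) Nil_proper_power by blast
  have "w \<noteq> []" using ne pow_Nil by metis
  obtain t p q where tpq: "t \<in> carrier (freegrp n)" "(p::nat) \<ge> 1" "(q::nat) \<ge> 1"
     "u = t [^]\<^bsub>freegrp n\<^esub> p" "w = t [^]\<^bsub>freegrp n\<^esub> q"
    using common_root[OF u(1) \<open>u \<noteq> []\<close> w \<open>w \<noteq> []\<close> u(3) k u(4)[symmetric]] by blast
  have "p = 1"
  proof (rule ccontr)
    assume "p \<noteq> 1"
    then have "p \<ge> 2" using tpq by simp
    then have "proper_power (freegrp n) u" using tpq unfolding proper_power_def by blast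
    then show False using u by simp
  qed
  then have "u = t" using tpq by (simp add: carrier_freegrp red_id)
  then show ?thesis using tpq unfolding u_def by blast
qed


context group begin

lemma conj_pow:
  assumes "c \<in> carrier G" "g \<in> carrier G"
  shows "c \<otimes> g [^] (k::nat) \<otimes> inv c = (c \<otimes> g \<otimes> inv c) [^] k"
proof (induction k)
  case 0 then show ?case using assms by simp
next
  case (Suc k)
  have "(c \<otimes> g \<otimes> inv c) [^] Suc k = (c \<otimes> g [^] k \<otimes> inv c) \<otimes> (c \<otimes> g \<otimes> inv c)"
    using Suc by simp
  also have "\<dots> = c \<otimes> (g [^] k \<otimes> g) \<otimes> inv c"
    using assms by (simp add: m_assoc[symmetric]) (simp add: m_assoc)
  finally show ?case by simp
qed

lemma conj_set_closed:
  "S \<subseteq> carrier G \<Longrightarrow> (\<Union>g\<in>carrier G. (\<lambda>s. g \<otimes> s \<otimes> inv g) ` S) \<subseteq> carrier G"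
  by auto

lemma normal_closure_normal:
  assumes "S \<subseteq> carrier G"
  shows "normal_closure G S \<lhd> G"
  unfolding normal_closure_def
proof (rule normal_generateI)
  show "(\<Union>g\<in>carrier G. (\<lambda>s. g \<otimes> s \<otimes> inv g) ` S) \<subseteq> carrier G" using assms by auto
  fix h g assume h: "h \<in> (\<Union>g\<in>carrier G. (\<lambda>s. g \<otimes> s \<otimes> inv g) ` S)" and g: "g \<in> carrier G"
  then obtain c s where cs: "c \<in> carrier G" "s \<in> S" "h = c \<otimes> s \<otimes> inv c" by blast
  have "g \<otimes> h \<otimes> inv g = (g \<otimes> c) \<otimes> s \<otimes> inv (g \<otimes> c)"
    using cs g assms by (auto simp: m_assoc inv_mult_group)
  then show "g \<otimes> h \<otimes> inv g \<in> (\<Union>g\<in>carrier G. (\<lambda>s. g \<otimes> s \<otimes> inv g) ` S)"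
    using cs g by auto
qed

lemma normal_closure_conj:
  "S \<subseteq> carrier G \<Longrightarrow> g \<in> carrier G \<Longrightarrow> s \<in> S \<Longrightarrow> g \<otimes> s \<otimes> inv g \<in> normal_closure G S"
  unfolding normal_closure_def by (rule generate.incl) blast

lemma normal_closure_incl:
  assumes "S \<subseteq> carrier G" shows "S \<subseteq> normal_closure G S"
proof
  fix s assume s: "s \<in> S"
  then have "\<one> \<otimes> s \<otimes> inv \<one> \<in> normal_closure G S"
    using normal_closure_conj[OF assms] by blast
  then show "s \<in> normal_closure G S" using assms s by auto
qed

lemma normal_closure_min:
  assumes "subgroup K G" "\<And>g s. g \<in> carrier G \<Longrightarrow> s \<in> S \<Longrightarrow> g \<otimes> s \<otimes> inv g \<in> K"
  shows "normal_closure G S \<subseteq> K"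
  unfolding normal_closure_def using assms by (intro generate_subgroup_incl) auto

lemma normal_closure_mono:
  assumes "S \<subseteq> T" shows "normal_closure G S \<subseteq> normal_closure G T"
  unfolding normal_closure_def by (rule mono_generate) (use assms in blast)

lemma normal_closure_subgroup:
  assumes "S \<subseteq> carrier G" shows "subgroup (normal_closure G S) G"
  using normal_closure_normal[OF assms] normal_invE by blast

subsection \<open>Finite index subgroups\<close>

lemma sub_pow_closed: "subgroup M G \<Longrightarrow> h \<in> M \<Longrightarrow> h [^] (q::nat) \<in> M"
  by (induction q) (auto simp: subgroup.one_closed subgroup.m_closed)

lemma rcosets_carrier_finite: "finite (rcosets (carrier G))"
proof -
  have "rcosets (carrier G) \<subseteq> {carrier G}"
    unfolding RCOSETS_def using subgroup.rcos_const[OF subgroup_self is_group] by auto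
  then show ?thesis using finite_subset by blast
qed

lemma rcos_Int:
  assumes "subgroup A G" "subgroup B G" "x \<in> carrier G"
  shows "(A \<inter> B) #> x = (A #> x) \<inter> (B #> x)"
proof
  show "(A \<inter> B) #> x \<subseteq> (A #> x) \<inter> (B #> x)" unfolding r_coset_def by auto
  show "(A #> x) \<inter> (B #> x) \<subseteq> (A \<inter> B) #> x"
  proof
    fix y assume y: "y \<in> (A #> x) \<inter> (B #> x)"
    then obtain a b where ab: "a \<in> A" "b \<in> B" "y = a \<otimes> x" "y = b \<otimes> x" unfolding r_coset_def by blast
    have "a \<in> carrier G" "b \<in> carrier G" using ab assms subgroup.mem_carrier by metis+
    then have "a = b" using ab assms(3) by (metis r_cancel)
    then show "y \<in> (A \<inter> B) #> x" using ab unfolding r_coset_def by blast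
  qed
qed

lemma finite_rcosets_Int:
  assumes "subgroup A G" "subgroup B G" "finite (rcosets A)" "finite (rcosets B)"
  shows "finite (rcosets (A \<inter> B))"
proof -
  have "rcosets (A \<inter> B) \<subseteq> (\<lambda>(P, Q). P \<inter> Q) ` ((rcosets A) \<times> (rcosets B))"
  proof
    fix C assume "C \<in> rcosets (A \<inter> B)"
    then obtain x where x: "x \<in> carrier G" "C = (A \<inter> B) #> x" unfolding RCOSETS_def by blast
    then have "C = (A #> x) \<inter> (B #> x)" using rcos_Int assms by blast
    moreover have "A #> x \<in> rcosets A" "B #> x \<in> rcosets B" using x unfolding RCOSETS_def by blast+
    ultimately show "C \<in> (\<lambda>(P, Q). P \<inter> Q) ` ((rcosets A) \<times> (rcosets B))" by force
  qed
  then show ?thesis using assms finite_subset by blast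
qed

lemma rcos_eq_imp:
  assumes "subgroup M G" "a \<in> carrier G" "b \<in> carrier G" "M #> a = M #> b"
  shows "a \<otimes> inv b \<in> M"
proof -
  have "a \<in> M #> b" using rcos_self[OF assms(2,1)] assms(4) by simp
  then show ?thesis using subgroup.rcos_module_imp[OF assms(1) is_group assms(3)] by blast
qed

lemma pow_in_fin_index:
  assumes M: "subgroup M G" "finite (rcosets M)" and x: "x \<in> carrier G"
  shows "x [^] (fact (card (rcosets M)) :: nat) \<in> M"
proof -
  define t where "t = card (rcosets M)"
  define f where "f = (\<lambda>j::nat. M #> x [^] j)"
  have "f ` {0..t} \<subseteq> rcosets M" unfolding f_def RCOSETS_def using x by auto
  then have "card (f ` {0..t}) \<le> t" unfolding t_def using M(2) card_mono by blast
  moreover have "card {0..t} = Suc t" by simp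
  ultimately have "\<not> inj_on f {0..t}"
    using card_image[of f "{0..t}"] by linarith
  then obtain i j where ij0: "i \<in> {0..t}" "j \<in> {0..t}" "i \<noteq> j" "f i = f j"
    unfolding inj_on_def by blast
  obtain i j where ij: "j \<le> t" "i < j" "f i = f j"
  proof (cases "i < j")
    case True then show ?thesis using ij0 that by auto
  next
    case False
    then have "j < i" using ij0 by simp
    moreover have "f j = f i" using ij0 by simp
    ultimately show ?thesis using ij0 that by (metis atLeastAtMost_iff)
  qed
  have xi: "x [^] i \<in> carrier G" and xj: "x [^] j \<in> carrier G" using x by simp_all
  have "M #> x [^] j = M #> x [^] i" using ij(3) unfolding f_def by simp
  then have "x [^] j \<otimes> inv (x [^] i) \<in> M"
    using rcos_eq_imp[OF M(1) xj xi] by blast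
  moreover have "x [^] j \<otimes> inv (x [^] i) = x [^] (j - i)"
  proof -
    have e: "(j - i) + i = j" using ij by simp
    have "x [^] (j - i) \<otimes> x [^] i = x [^] ((j - i) + i)" by (rule nat_pow_mult[OF x])
    then have "x [^] j = x [^] (j - i) \<otimes> x [^] i" unfolding e by simp
    then show ?thesis using x by (simp add: m_assoc)
  qed
  ultimately have xji: "x [^] (j - i) \<in> M" by simp
  have "(j - i) dvd fact t" using ij by (intro dvd_fact) auto
  then obtain q where q: "fact t = (j - i) * q" by blast
  have "(x [^] (j - i)) [^] q = x [^] ((j - i) * q)" by (rule nat_pow_pow[OF x])
  then have "x [^] (fact t :: nat) = (x [^] (j - i)) [^] q" unfolding q by simp
  also have "\<dots> \<in> M" using sub_pow_closed[OF M(1) xji] .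
  finally show ?thesis unfolding t_def .
qed


subsection \<open>The finite residual\<close>

lemma fin_res_eq: "fin_res G = \<Inter>{H. subgroup H G \<and> finite (rcosets H)}"
proof -
  have "carrier G \<in> {H. subgroup H G \<and> finite (rcosets H)}"
    using subgroup_self rcosets_carrier_finite by blast
  then show ?thesis unfolding fin_res_def by blast
qed

lemma fin_res_subgroup: "subgroup (fin_res G) G"
  unfolding fin_res_eq
  by (rule subgroups_Inter) (use subgroup_self rcosets_carrier_finite in blast)+

lemma conj_subgroup:
  assumes K: "subgroup K G" and x: "x \<in> carrier G"
  shows "subgroup ((\<lambda>y. inv x \<otimes> y \<otimes> x) ` K) G"
proof (rule subgroupI)
  have Kc: "K \<subseteq> carrier G" using K subgroup.subset by blast
  show "(\<lambda>y. inv x \<otimes> y \<otimes> x) ` K \<subseteq> carrier G" using Kc x by auto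
  show "(\<lambda>y. inv x \<otimes> y \<otimes> x) ` K \<noteq> {}" using subgroup.one_closed[OF K] by blast
  fix a assume "a \<in> (\<lambda>y. inv x \<otimes> y \<otimes> x) ` K"
  then obtain k where k: "k \<in> K" "a = inv x \<otimes> k \<otimes> x" by blast
  have kc: "k \<in> carrier G" using k Kc by blast
  have "inv a = inv x \<otimes> inv k \<otimes> x"
    using k kc x by (simp add: inv_mult_group m_assoc)
  then show "inv a \<in> (\<lambda>y. inv x \<otimes> y \<otimes> x) ` K"
    using subgroup.m_inv_closed[OF K k(1)] by blast
next
  have Kc: "K \<subseteq> carrier G" using K subgroup.subset by blast
  fix a b assume "a \<in> (\<lambda>y. inv x \<otimes> y \<otimes> x) ` K" "b \<in> (\<lambda>y. inv x \<otimes> y \<otimes> x) ` K"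
  then obtain k l where kl: "k \<in> K" "a = inv x \<otimes> k \<otimes> x" "l \<in> K" "b = inv x \<otimes> l \<otimes> x" by blast
  have c: "k \<in> carrier G" "l \<in> carrier G" using kl Kc by blast+
  have "a \<otimes> b = inv x \<otimes> (k \<otimes> l) \<otimes> x"
    using kl c x by (simp add: m_assoc r_inv[symmetric] del: r_inv) (simp add: m_assoc[symmetric])
  then show "a \<otimes> b \<in> (\<lambda>y. inv x \<otimes> y \<otimes> x) ` K"
    using subgroup.m_closed[OF K kl(1,3)] by blast
qed

lemma conj_rcosets_finite:
  assumes K: "subgroup K G" "finite (rcosets K)" and x: "x \<in> carrier G"
  shows "finite (rcosets ((\<lambda>y. inv x \<otimes> y \<otimes> x) ` K))"
proof -
  have Kc: "K \<subseteq> carrier G" using K subgroup.subset by blast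
  have eq: "((\<lambda>y. inv x \<otimes> y \<otimes> x) ` K) #> z = (\<lambda>y. inv x \<otimes> y) ` (K #> (x \<otimes> z))"
    if z: "z \<in> carrier G" for z
  proof -
    have "inv x \<otimes> k \<otimes> x \<otimes> z = inv x \<otimes> (k \<otimes> (x \<otimes> z))" if "k \<in> K" for k
      using that Kc x z by (simp add: m_assoc subsetD)
    then show ?thesis unfolding r_coset_def by (auto simp: image_iff)
  qed
  have "rcosets ((\<lambda>y. inv x \<otimes> y \<otimes> x) ` K) \<subseteq> (\<lambda>C. (\<lambda>y. inv x \<otimes> y) ` C) ` (rcosets K)"
  proof
    fix C assume "C \<in> rcosets ((\<lambda>y. inv x \<otimes> y \<otimes> x) ` K)"
    then obtain z where z: "z \<in> carrier G" "C = ((\<lambda>y. inv x \<otimes> y \<otimes> x) ` K) #> z"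
      unfolding RCOSETS_def by blast
    then have "C = (\<lambda>y. inv x \<otimes> y) ` (K #> (x \<otimes> z))" using eq by blast
    moreover have "K #> (x \<otimes> z) \<in> rcosets K" using x z unfolding RCOSETS_def by blast
    ultimately show "C \<in> (\<lambda>C. (\<lambda>y. inv x \<otimes> y) ` C) ` (rcosets K)" by blast
  qed
  then show ?thesis using K(2) finite_subset by blast
qed

lemma fin_res_normal: "fin_res G \<lhd> G"
proof (rule normal_invI[OF fin_res_subgroup])
  fix x h assume x: "x \<in> carrier G" and h: "h \<in> fin_res G"
  have "x \<otimes> h \<otimes> inv x \<in> K" if K: "subgroup K G" "finite (rcosets K)" for K
  proof -
    have "h \<in> (\<lambda>y. inv x \<otimes> y \<otimes> x) ` K"
      using h conj_subgroup[OF K(1) x] conj_rcosets_finite[OF K x] unfolding fin_res_def by blast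
    then obtain k where k: "k \<in> K" "h = inv x \<otimes> k \<otimes> x" by blast
    have "k \<in> carrier G" using k K subgroup.mem_carrier by metis
    then have "x \<otimes> h \<otimes> inv x = k" using k x by (simp add: m_assoc[symmetric]) (simp add: m_assoc)
    then show ?thesis using k by simp
  qed
  moreover have "x \<otimes> h \<otimes> inv x \<in> carrier G"
    using x h fin_res_subgroup subgroup.mem_carrier by (metis inv_closed m_closed)
  ultimately show "x \<otimes> h \<otimes> inv x \<in> fin_res G" unfolding fin_res_def by blast
qed

lemma separate:
  assumes rf: "fin_res G = {\<one>}" and S: "finite S" "S \<subseteq> carrier G" "\<one> \<notin> S"
  shows "\<exists>M. subgroup M G \<and> finite (rcosets M) \<and> M \<inter> S = {}"
  using S
proof (induction S rule: finite_induct)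
  case empty
  then show ?case using subgroup_self rcosets_carrier_finite by blast
next
  case (insert s S)
  then obtain M where M: "subgroup M G" "finite (rcosets M)" "M \<inter> S = {}" by auto
  have "s \<notin> fin_res G" using rf insert by auto
  then obtain K where K: "subgroup K G" "finite (rcosets K)" "s \<notin> K"
    using insert unfolding fin_res_def by blast
  have "subgroup (M \<inter> K) G" using M K subgroups_Inter_pair by blast
  moreover have "finite (rcosets (M \<inter> K))" using finite_rcosets_Int M K by blast
  moreover have "(M \<inter> K) \<inter> insert s S = {}" using M K by blast
  ultimately show ?case by blast
qed

lemma ord_Mod_triv:
  assumes x: "x \<in> carrier G"
  shows "group.ord (G Mod {\<one>}) ({\<one>} #> x) = ord x"
proof -
  interpret N: normal "{\<one>}" G by (rule one_is_normal)
  interpret Q: group "G Mod {\<one>}" by (rule N.factorgroup_is_group)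
  have c: "{\<one>} #> x \<in> carrier (G Mod {\<one>})" using x by (simp add: carrier_FactGroup)
  have co: "{\<one>} #> y = {y}" if "y \<in> carrier G" for y using that by (simp add: r_coset_def)
  have "(({\<one>} #> x) [^]\<^bsub>G Mod {\<one>}\<^esub> n = \<one>\<^bsub>G Mod {\<one>}\<^esub>) \<longleftrightarrow> x [^] n = \<one>" for n :: nat
    using N.FactGroup_pow[OF x, of n] x co[of "x [^] n"] by simp
  then have "Q.ord ({\<one>} #> x) dvd n \<longleftrightarrow> ord x dvd n" for n
    using Q.pow_eq_id[OF c] pow_eq_id[OF x] by simp
  then show ?thesis by (meson dvd_antisym dvd_refl)
qed

end


context normal begin

lemma coset_hom: "group_hom G (G Mod H) (\<lambda>y. H #> y)"
  unfolding group_hom_def group_hom_axioms_def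
  using is_group factorgroup_is_group r_coset_hom_Mod by blast

lemma word_eval_Mod:
  assumes a: "\<forall>i<n. a i \<in> carrier G" and w: "set w \<subseteq> ltr n"
  shows "word_eval (G Mod H) (\<lambda>i. H #> a i) w = H #> word_eval G a w"
  using w
proof (induction w)
  case Nil
  then show ?case using subset by simp
next
  case (Cons x w)
  interpret h: group_hom G "G Mod H" "\<lambda>y. H #> y" by (rule coset_hom)
  have ax: "a (fst x) \<in> carrier G" using Cons.prems a by (cases x) auto
  have lv: "lval (G Mod H) (\<lambda>i. H #> a i) x = H #> lval G a x"
    using ax by (cases x) (auto simp: lval_def)
  have ew: "word_eval G a w \<in> carrier G"
    using Cons.prems a by (intro word_eval_closed) auto
  have "word_eval (G Mod H) (\<lambda>i. H #> a i) (x # w)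
        = (H #> lval G a x) \<otimes>\<^bsub>G Mod H\<^esub> (H #> word_eval G a w)"
    using Cons by (simp add: word_eval_Cons lv)
  also have "\<dots> = H #> (lval G a x \<otimes> word_eval G a w)"
    using ax ew lval_closed by (simp add: h.hom_mult[symmetric])
  finally show ?case by (simp add: word_eval_Cons)
qed

lemma image_subgroup_fin:
  assumes M: "subgroup M G" "finite (rcosets M)" "H \<subseteq> M"
  shows "subgroup ((\<lambda>g. H #> g) ` M) (G Mod H)"
    and "finite (rcosets\<^bsub>G Mod H\<^esub> ((\<lambda>g. H #> g) ` M))"
    and "\<And>y. y \<in> carrier G \<Longrightarrow> H #> y \<in> (\<lambda>g. H #> g) ` M \<Longrightarrow> y \<in> M"
proof -
  interpret h: group_hom G "G Mod H" "\<lambda>y. H #> y" by (rule coset_hom)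
  interpret Q: group "G Mod H" by (rule factorgroup_is_group)
  show "subgroup ((\<lambda>g. H #> g) ` M) (G Mod H)" by (rule h.subgroup_img_is_subgroup[OF M(1)])
  have Mc: "M \<subseteq> carrier G" using M(1) subgroup.subset by blast
  have eq: "((\<lambda>g. H #> g) ` M) #>\<^bsub>G Mod H\<^esub> (H #> y) = (\<lambda>g. H #> g) ` (M #> y)"
    if y: "y \<in> carrier G" for y
  proof -
    have f: "(H #> m) \<otimes>\<^bsub>G Mod H\<^esub> (H #> y) = H #> (m \<otimes> y)" if "m \<in> M" for m
    proof -
      have "m \<in> carrier G" using that Mc by blast
      then show ?thesis using rcos_sum[of m y] y by simp
    qed
    have 1: "((\<lambda>g. H #> g) ` M) #>\<^bsub>G Mod H\<^esub> (H #> y)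
             = (\<lambda>m. (H #> m) \<otimes>\<^bsub>G Mod H\<^esub> (H #> y)) ` M"
      unfolding r_coset_def by blast
    have 2: "(\<lambda>m. (H #> m) \<otimes>\<^bsub>G Mod H\<^esub> (H #> y)) ` M = (\<lambda>m. H #> (m \<otimes> y)) ` M"
      using f by (rule image_cong[OF refl])
    have 3: "M #> y = (\<lambda>m. m \<otimes> y) ` M" unfolding r_coset_def by blast
    show ?thesis unfolding 1 2 3 image_image by (rule refl)
  qed
  have "rcosets\<^bsub>G Mod H\<^esub> ((\<lambda>g. H #> g) ` M) \<subseteq> (\<lambda>C. (\<lambda>g. H #> g) ` C) ` (rcosets M)"
  proof
    fix C assume "C \<in> rcosets\<^bsub>G Mod H\<^esub> ((\<lambda>g. H #> g) ` M)"
    then obtain q where q: "q \<in> carrier (G Mod H)" "C = ((\<lambda>g. H #> g) ` M) #>\<^bsub>G Mod H\<^esub> q"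
      unfolding RCOSETS_def by blast
    then obtain y where y: "y \<in> carrier G" "q = H #> y" by (auto simp: carrier_FactGroup)
    then have "C = (\<lambda>g. H #> g) ` (M #> y)" using eq[OF y(1)] q(2) y(2) by simp
    moreover have "M #> y \<in> rcosets M" using y unfolding RCOSETS_def by blast
    ultimately show "C \<in> (\<lambda>C. (\<lambda>g. H #> g) ` C) ` (rcosets M)" by blast
  qed
  then show "finite (rcosets\<^bsub>G Mod H\<^esub> ((\<lambda>g. H #> g) ` M))"
    by (rule finite_subset) (rule finite_imageI[OF M(2)])
  fix y assume y: "y \<in> carrier G" "H #> y \<in> (\<lambda>g. H #> g) ` M"
  then obtain m where m: "m \<in> M" "H #> y = H #> m" by blast
  have mc: "m \<in> carrier G" using m Mc by blast
  have "y \<otimes> inv m \<in> H" using rcos_eq_imp[OF subgroup_axioms y(1) mc m(2)] .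
  then have "y \<otimes> inv m \<in> M" using M(3) by blast
  then have "y \<otimes> inv m \<otimes> m \<in> M" by (rule subgroup.m_closed[OF M(1) _ m(1)])
  moreover have "y \<otimes> inv m \<otimes> m = y" using y(1) mc by (simp add: m_assoc)
  ultimately show "y \<in> M" by simp
qed

lemma ord_bound:
  assumes M: "subgroup M G" "finite (rcosets M)" "H \<subseteq> M" and x: "x \<in> carrier G"
  shows "x [^] (group.ord ((G Mod H) Mod fin_res (G Mod H))
                 (fin_res (G Mod H) #>\<^bsub>G Mod H\<^esub> (H #> x))) \<in> M"
proof -
  interpret Q: group "G Mod H" by (rule factorgroup_is_group)
  define RQ where "RQ = fin_res (G Mod H)"
  interpret RQ: normal RQ "G Mod H" unfolding RQ_def by (rule Q.fin_res_normal)
  interpret QR: group "(G Mod H) Mod RQ" by (rule RQ.factorgroup_is_group)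
  define ee where "ee = QR.ord (RQ #>\<^bsub>G Mod H\<^esub> (H #> x))"
  have hx: "H #> x \<in> carrier (G Mod H)" using x by (simp add: carrier_FactGroup)
  have y: "RQ #>\<^bsub>G Mod H\<^esub> (H #> x) \<in> carrier ((G Mod H) Mod RQ)"
    using hx by (simp add: carrier_FactGroup)
  have "(RQ #>\<^bsub>G Mod H\<^esub> (H #> x)) [^]\<^bsub>(G Mod H) Mod RQ\<^esub> ee = RQ"
    using QR.pow_ord_eq_1[OF y] unfolding ee_def by simp
  moreover have "(RQ #>\<^bsub>G Mod H\<^esub> (H #> x)) [^]\<^bsub>(G Mod H) Mod RQ\<^esub> ee
      = RQ #>\<^bsub>G Mod H\<^esub> ((H #> x) [^]\<^bsub>G Mod H\<^esub> ee)"
    by (rule RQ.FactGroup_pow[OF hx])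
  moreover have "(H #> x) [^]\<^bsub>G Mod H\<^esub> ee = H #> x [^] ee"
    by (rule FactGroup_pow[OF x])
  ultimately have eqR: "RQ #>\<^bsub>G Mod H\<^esub> (H #> x [^] ee) = RQ" by simp
  have hxX: "H #> x [^] ee \<in> carrier (G Mod H)" using x by (simp add: carrier_FactGroup)
  have "H #> x [^] ee \<in> RQ"
    using Q.rcos_self[OF hxX RQ.subgroup_axioms] eqR by simp
  moreover have "RQ \<subseteq> (\<lambda>g. H #> g) ` M"
    unfolding RQ_def fin_res_def using image_subgroup_fin(1,2)[OF M] by blast
  ultimately have "H #> x [^] ee \<in> (\<lambda>g. H #> g) ` M" by blast
  then show ?thesis using image_subgroup_fin(3)[OF M] x unfolding ee_def RQ_def by simp
qed

end


lemma fin_pres_hom: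
  assumes G: "group G" and P: "fin_pres G n a R"
  shows "group_hom (freegrp n) G (word_eval G a)"
  using group.word_eval_hom[OF G] P unfolding fin_pres_def by blast

lemma quot_pres:
  assumes G: "group G" and P: "fin_pres G n a R"
    and Hn: "H = normal_closure G T" and T: "T \<subseteq> carrier G"
    and W: "finite W" "W \<subseteq> carrier (freegrp n)" "[] \<notin> W"
    and WT: "\<forall>w\<in>W. word_eval G a w \<in> T"
    and TW: "\<forall>s\<in>T. s = \<one>\<^bsub>G\<^esub> \<or> (\<exists>w\<in>W. word_eval G a w = s)"
  shows "fin_pres (G Mod H) n (\<lambda>i. H #>\<^bsub>G\<^esub> a i) (R \<union> W)"
proof -
  interpret G: group G by (rule G)
  interpret phi: group_hom "freegrp n" G "word_eval G a" by (rule fin_pres_hom[OF G P])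
  have aC: "\<forall>i<n. a i \<in> carrier G" and R: "finite R" "R \<subseteq> carrier (freegrp n)" "[] \<notin> R"
    and surj: "word_eval G a ` carrier (freegrp n) = carrier G"
    and ker: "kernel (freegrp n) G (word_eval G a) = normal_closure (freegrp n) R"
    using P unfolding fin_pres_def by auto
  have HN: "H \<lhd> G" unfolding Hn by (rule G.normal_closure_normal[OF T])
  interpret N: normal H G by (rule HN)
  interpret Q: group "G Mod H" by (rule N.factorgroup_is_group)
  define a' where "a' = (\<lambda>i. H #>\<^bsub>G\<^esub> a i)"
  have a'C: "\<forall>i<n. a' i \<in> carrier (G Mod H)"
    using aC by (auto simp: a'_def carrier_FactGroup)
  interpret psi: group_hom "freegrp n" "G Mod H" "word_eval (G Mod H) a'"
    by (rule Q.word_eval_hom[OF a'C])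
  have psi_eq: "word_eval (G Mod H) a' w = H #>\<^bsub>G\<^esub> word_eval G a w" if "w \<in> carrier (freegrp n)" for w
    unfolding a'_def using N.word_eval_Mod[OF aC] that by (simp add: carrier_freegrp)
  have cosH: "H #>\<^bsub>G\<^esub> y = H \<longleftrightarrow> y \<in> H" if "y \<in> carrier G" for y
    using G.rcos_self[OF that N.subgroup_axioms] N.rcos_const[OF G] by blast
  have kerQ: "kernel (freegrp n) (G Mod H) (word_eval (G Mod H) a')
              = {w \<in> carrier (freegrp n). word_eval G a w \<in> H}"
  proof -
    have "\<forall>x\<in>carrier (freegrp n). (word_eval (G Mod H) a' x = H) \<longleftrightarrow> (word_eval G a x \<in> H)"
      using psi_eq cosH phi.hom_closed by simp
    then show ?thesis unfolding kernel_def one_FactGroup by blast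
  qed
  have RW: "R \<union> W \<subseteq> carrier (freegrp n)" using R W by blast
  have Rker: "word_eval G a r = \<one>\<^bsub>G\<^esub>" if "r \<in> R" for r
  proof -
    have "r \<in> normal_closure (freegrp n) R" using group.normal_closure_incl[OF group_freegrp R(2)] that by blast
    then show ?thesis using ker unfolding kernel_def by blast
  qed
  have TH: "T \<subseteq> H" unfolding Hn by (rule G.normal_closure_incl[OF T])
  have "kernel (freegrp n) (G Mod H) (word_eval (G Mod H) a') = normal_closure (freegrp n) (R \<union> W)"
  proof
    show "normal_closure (freegrp n) (R \<union> W) \<subseteq> kernel (freegrp n) (G Mod H) (word_eval (G Mod H) a')"
    proof (rule group.normal_closure_min[OF group_freegrp])
      show "subgroup (kernel (freegrp n) (G Mod H) (word_eval (G Mod H) a')) (freegrp n)"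
        by (rule psi.subgroup_kernel)
      fix v s assume v: "v \<in> carrier (freegrp n)" and s: "s \<in> R \<union> W"
      have "s \<in> kernel (freegrp n) (G Mod H) (word_eval (G Mod H) a')"
      proof -
        have sc: "s \<in> carrier (freegrp n)" using s RW by blast
        have "word_eval G a s \<in> H"
        proof (cases "s \<in> R")
          case True then show ?thesis using Rker N.one_closed by simp
        next
          case False then have "s \<in> W" using s by blast
          then show ?thesis using WT TH by blast
        qed
        then show ?thesis unfolding kerQ using sc by blast
      qed
      then show "v \<otimes>\<^bsub>freegrp n\<^esub> s \<otimes>\<^bsub>freegrp n\<^esub> inv\<^bsub>freegrp n\<^esub> v
                 \<in> kernel (freegrp n) (G Mod H) (word_eval (G Mod H) a')"
        using group.normal_invE(2)[OF group_freegrp psi.normal_kernel v] by blast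
    qed
  next
    show "kernel (freegrp n) (G Mod H) (word_eval (G Mod H) a') \<subseteq> normal_closure (freegrp n) (R \<union> W)"
    proof
      fix w assume "w \<in> kernel (freegrp n) (G Mod H) (word_eval (G Mod H) a')"
      then have w: "w \<in> carrier (freegrp n)" "word_eval G a w \<in> H" unfolding kerQ by auto
      define NN where "NN = normal_closure (freegrp n) (R \<union> W)"
      have NNs: "subgroup NN (freegrp n)" unfolding NN_def by (rule group.normal_closure_subgroup[OF group_freegrp RW])
      have IMs: "subgroup (word_eval G a ` NN) G" by (rule phi.subgroup_img_is_subgroup[OF NNs])
      have "H \<subseteq> word_eval G a ` NN"
        unfolding Hn
      proof (rule G.normal_closure_min[OF IMs])
        fix c s assume c: "c \<in> carrier G" and s: "s \<in> T"
        have "c \<in> word_eval G a ` carrier (freegrp n)" using surj c by simp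
        then obtain v where v: "v \<in> carrier (freegrp n)" "word_eval G a v = c" by (metis imageE)
        show "c \<otimes>\<^bsub>G\<^esub> s \<otimes>\<^bsub>G\<^esub> inv\<^bsub>G\<^esub> c \<in> word_eval G a ` NN"
        proof (cases "s = \<one>\<^bsub>G\<^esub>")
          case True
          then have e1: "c \<otimes>\<^bsub>G\<^esub> s \<otimes>\<^bsub>G\<^esub> inv\<^bsub>G\<^esub> c = word_eval G a []" using c by simp
          have e2: "[] \<in> NN" using subgroup.one_closed[OF NNs] by simp
          show ?thesis using e2 e1 by (rule rev_image_eqI)
        next
          case False
          then obtain r where r: "r \<in> W" "word_eval G a r = s" using TW s by blast
          have rc: "r \<in> carrier (freegrp n)" using r W by blast
          have m1: "v \<otimes>\<^bsub>freegrp n\<^esub> r \<otimes>\<^bsub>freegrp n\<^esub> inv\<^bsub>freegrp n\<^esub> v \<in> NN"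
            unfolding NN_def using group.normal_closure_conj[OF group_freegrp RW v(1)] r by blast
          have m2: "word_eval G a (v \<otimes>\<^bsub>freegrp n\<^esub> r \<otimes>\<^bsub>freegrp n\<^esub> inv\<^bsub>freegrp n\<^esub> v)
                         = c \<otimes>\<^bsub>G\<^esub> s \<otimes>\<^bsub>G\<^esub> inv\<^bsub>G\<^esub> c"
            using v rc r by (simp del: mult_freegrp)
          show ?thesis using m2[symmetric] m1 by (rule image_eqI[where f = "word_eval G a"])
        qed
      qed
      then have "word_eval G a w \<in> word_eval G a ` NN" using w(2) by (rule subsetD)
      then obtain y where y: "y \<in> NN" "word_eval G a y = word_eval G a w" by (metis imageE)
      have yc: "y \<in> carrier (freegrp n)" using y NNs subgroup.mem_carrier by metis
      have "w \<otimes>\<^bsub>freegrp n\<^esub> inv\<^bsub>freegrp n\<^esub> y \<in> kernel (freegrp n) G (word_eval G a)"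
        unfolding kernel_def using w yc y by (simp del: mult_freegrp)
      then have "w \<otimes>\<^bsub>freegrp n\<^esub> inv\<^bsub>freegrp n\<^esub> y \<in> NN"
        unfolding ker NN_def using group.normal_closure_mono[OF group_freegrp, of R "R \<union> W" n] by blast
      then have "(w \<otimes>\<^bsub>freegrp n\<^esub> inv\<^bsub>freegrp n\<^esub> y) \<otimes>\<^bsub>freegrp n\<^esub> y \<in> NN"
        using subgroup.m_closed[OF NNs _ y(1)] by blast
      moreover have "(w \<otimes>\<^bsub>freegrp n\<^esub> inv\<^bsub>freegrp n\<^esub> y) \<otimes>\<^bsub>freegrp n\<^esub> y = w"
        using w yc by (simp add: F.m_assoc del: mult_freegrp) (simp add: carrier_freegrp red_id)
      ultimately show "w \<in> normal_closure (freegrp n) (R \<union> W)" unfolding NN_def by simp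
    qed
  qed
  moreover have "word_eval (G Mod H) a' ` carrier (freegrp n) = carrier (G Mod H)"
  proof -
    have "word_eval (G Mod H) a' ` carrier (freegrp n) = (\<lambda>w. H #>\<^bsub>G\<^esub> word_eval G a w) ` carrier (freegrp n)"
      by (rule image_cong[OF refl psi_eq])
    then have "word_eval (G Mod H) a' ` carrier (freegrp n) = (\<lambda>y. H #>\<^bsub>G\<^esub> y) ` (word_eval G a ` carrier (freegrp n))"
      by (simp add: image_image)
    then show ?thesis using surj by (simp add: carrier_FactGroup)
  qed
  moreover have "finite (R \<union> W)" "[] \<notin> R \<union> W" using R W by auto
  ultimately have "(\<forall>i<n. a' i \<in> carrier (G Mod H)) \<and> finite (R \<union> W) \<and> R \<union> W \<subseteq> carrier (freegrp n) \<and>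
      [] \<notin> R \<union> W \<and> word_eval (G Mod H) a' ` carrier (freegrp n) = carrier (G Mod H) \<and>
      kernel (freegrp n) (G Mod H) (word_eval (G Mod H) a') = normal_closure (freegrp n) (R \<union> W)"
    using a'C RW by (intro conjI)
  then show ?thesis unfolding fin_pres_def a'_def .
qed


lemma step:
  fixes G :: "('g, 'b) monoid_scheme" and gs :: "'g list"
  assumes G: "group G" and rf: "fin_res G = {\<one>\<^bsub>G\<^esub>}" and gsC: "set gs \<subseteq> carrier G"
    and P: "fin_pres G n a R" and N: "N \<ge> 1"
    and small: "real (length gs) / real N < rdef_pres G n a R - 1"
  shows "\<exists>k\<ge>N. 1 < rdef (G Mod normal_closure G ((\<lambda>g. g [^]\<^bsub>G\<^esub> k) ` set gs))"
proof -
  interpret G: group G by (rule G)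
  interpret phi: group_hom "freegrp n" G "word_eval G a" by (rule fin_pres_hom[OF G P])
  have aC: "\<forall>i<n. a i \<in> carrier G" and R: "finite R" "R \<subseteq> carrier (freegrp n)" "[] \<notin> R"
    and surj: "word_eval G a ` carrier (freegrp n) = carrier G"
    and ker: "kernel (freegrp n) G (word_eval G a) = normal_closure (freegrp n) R"
    using P unfolding fin_pres_def by auto
  have Rker: "word_eval G a r = \<one>\<^bsub>G\<^esub>" if "r \<in> R" for r
  proof -
    have "r \<in> normal_closure (freegrp n) R" using group.normal_closure_incl[OF group_freegrp R(2)] that by blast
    then show ?thesis using ker unfolding kernel_def by blast
  qed
  define u where "u = froot n"
  have uR: "u r \<in> carrier (freegrp n) \<and> (\<exists>mm::nat. mm \<ge> 1 \<and> r = u r [^]\<^bsub>freegrp n\<^esub> mm)" if "r \<in> R" for r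
    using froot_props[of r n] that R unfolding u_def by blast
  define d where "d r = G.ord (word_eval G a (u r))" for r
  have dpos: "d r > 0" if r: "r \<in> R" for r
  proof -
    obtain mm :: nat where mm: "mm \<ge> 1" "r = u r [^]\<^bsub>freegrp n\<^esub> mm" and uc: "u r \<in> carrier (freegrp n)"
      using uR[OF r] by blast
    have "word_eval G a (u r) [^]\<^bsub>G\<^esub> mm = \<one>\<^bsub>G\<^esub>"
      using phi.hom_nat_pow[OF uc, of mm] mm(2) Rker[OF r] by simp
    then have "d r dvd mm" unfolding d_def using G.pow_eq_id uc by simp
    then show ?thesis using mm(1) by (cases "d r") auto
  qed
  define Inf where "Inf = {g \<in> set gs. G.ord g = 0}"
  define S where "S = (\<Union>r\<in>R. (\<lambda>j::nat. word_eval G a (u r) [^]\<^bsub>G\<^esub> j) ` {1..<d r})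
                    \<union> (\<Union>g\<in>Inf. (\<lambda>j::nat. g [^]\<^bsub>G\<^esub> j) ` {1..<N})"
  have Sfin: "finite S" unfolding S_def Inf_def using R(1) by auto
  have uC: "word_eval G a (u r) \<in> carrier G" if "r \<in> R" for r using uR[OF that] by simp
  have SC: "S \<subseteq> carrier G" unfolding S_def Inf_def using uC gsC by auto
  have S1: "\<one>\<^bsub>G\<^esub> \<notin> S"
  proof
    assume "\<one>\<^bsub>G\<^esub> \<in> S"
    then consider (a) r j where "r \<in> R" "j \<in> {1..<d r}" "word_eval G a (u r) [^]\<^bsub>G\<^esub> (j::nat) = \<one>\<^bsub>G\<^esub>"
      | (b) g j where "g \<in> Inf" "j \<in> {1..<N}" "g [^]\<^bsub>G\<^esub> (j::nat) = \<one>\<^bsub>G\<^esub>"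
      unfolding S_def by (auto simp: image_iff)
    then show False
    proof cases
      case a
      then have "d r dvd j" unfolding d_def using G.pow_eq_id uC by simp
      then show False using a by (auto dest: dvd_imp_le)
    next
      case b
      then have "G.ord g dvd j" using G.pow_eq_id gsC unfolding Inf_def by auto
      then show False using b unfolding Inf_def by auto
    qed
  qed
  obtain M where M: "subgroup M G" "finite (rcosets\<^bsub>G\<^esub> M)" "M \<inter> S = {}"
    using G.separate[OF rf Sfin SC S1] by blast
  define t where "t = card (rcosets\<^bsub>G\<^esub> M)"
  define L where "L = (\<Prod>g\<in>set gs - Inf. G.ord g)"
  define k where "k = N * L * fact t"
  have Lpos: "L > 0" unfolding L_def Inf_def by (rule prod_pos) auto
  have "0 < L * fact t" using Lpos by simp
  then have "N * 1 \<le> N * (L * fact t)" by (intro mult_le_mono2) simp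
  then have kN: "k \<ge> N" unfolding k_def by (simp add: mult.assoc)
  have powk: "x [^]\<^bsub>G\<^esub> k \<in> M" if x: "x \<in> carrier G" for x
  proof -
    have xf: "x [^]\<^bsub>G\<^esub> (fact t :: nat) \<in> M" using G.pow_in_fin_index[OF M(1,2) x] unfolding t_def .
    have "x [^]\<^bsub>G\<^esub> k = (x [^]\<^bsub>G\<^esub> (fact t :: nat)) [^]\<^bsub>G\<^esub> (N * L)"
      using G.nat_pow_pow[OF x, of "fact t" "N * L"] unfolding k_def by (simp add: ac_simps)
    also have "\<dots> \<in> M" by (rule G.sub_pow_closed[OF M(1) xf])
    finally show ?thesis .
  qed
  have finord: "g [^]\<^bsub>G\<^esub> k = \<one>\<^bsub>G\<^esub>" if g: "g \<in> set gs - Inf" for g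
  proof -
    have "G.ord g dvd L" unfolding L_def using g by (intro dvd_prodI) auto
    then have "G.ord g dvd k" unfolding k_def by simp
    then show ?thesis using G.pow_eq_id gsC g by auto
  qed
  define T where "T = (\<lambda>g. g [^]\<^bsub>G\<^esub> k) ` set gs"
  define H where "H = normal_closure G T"
  have TC: "T \<subseteq> carrier G" unfolding T_def using gsC by auto
  have HM: "H \<subseteq> M"
    unfolding H_def
  proof (rule G.normal_closure_min[OF M(1)])
    fix c s assume c: "c \<in> carrier G" and s: "s \<in> T"
    then obtain g where g: "g \<in> set gs" "s = g [^]\<^bsub>G\<^esub> k" unfolding T_def by blast
    have gc: "g \<in> carrier G" using g gsC by blast
    have "c \<otimes>\<^bsub>G\<^esub> s \<otimes>\<^bsub>G\<^esub> inv\<^bsub>G\<^esub> c = (c \<otimes>\<^bsub>G\<^esub> g \<otimes>\<^bsub>G\<^esub> inv\<^bsub>G\<^esub> c) [^]\<^bsub>G\<^esub> k"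
      using G.conj_pow[OF c gc] g by simp
    then show "c \<otimes>\<^bsub>G\<^esub> s \<otimes>\<^bsub>G\<^esub> inv\<^bsub>G\<^esub> c \<in> M" using powk c gc by simp
  qed
  define wg where "wg g = (SOME w. w \<in> carrier (freegrp n) \<and> word_eval G a w = g)" for g
  have wg: "wg g \<in> carrier (freegrp n) \<and> word_eval G a (wg g) = g" if g: "g \<in> carrier G" for g
  proof -
    have "g \<in> word_eval G a ` carrier (freegrp n)" using surj g by simp
    then have "\<exists>w. w \<in> carrier (freegrp n) \<and> word_eval G a w = g" by (metis imageE)
    then show ?thesis unfolding wg_def by (rule someI_ex)
  qed
  define W where "W = (\<lambda>g. wg g [^]\<^bsub>freegrp n\<^esub> k) ` Inf"
  have k1: "k \<ge> 1" using kN N by simp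
  have Infc: "g \<in> carrier G" if "g \<in> Inf" for g using that gsC unfolding Inf_def by auto
  have evW: "word_eval G a (wg g [^]\<^bsub>freegrp n\<^esub> k) = g [^]\<^bsub>G\<^esub> k" if g: "g \<in> Inf" for g
    using phi.hom_nat_pow[of "wg g" k] wg[OF Infc[OF g]] by simp
  have gk1: "g [^]\<^bsub>G\<^esub> k \<noteq> \<one>\<^bsub>G\<^esub>" if g: "g \<in> Inf" for g
    using G.pow_eq_id[OF Infc[OF g], of k] g k1 unfolding Inf_def by auto
  have Wfin: "finite W" unfolding W_def Inf_def by simp
  have WC: "W \<subseteq> carrier (freegrp n)" unfolding W_def using wg Infc by auto
  have W0: "[] \<notin> W"
  proof
    assume "[] \<in> W"
    then obtain g where g: "g \<in> Inf" "[] = wg g [^]\<^bsub>freegrp n\<^esub> k" unfolding W_def by blast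
    then have "word_eval G a [] = g [^]\<^bsub>G\<^esub> k" using evW[OF g(1)] by metis
    then show False using gk1[OF g(1)] by simp
  qed
  have WT: "\<forall>w\<in>W. word_eval G a w \<in> T"
    unfolding W_def T_def Inf_def using evW Inf_def by auto
  have TW: "\<forall>s\<in>T. s = \<one>\<^bsub>G\<^esub> \<or> (\<exists>w\<in>W. word_eval G a w = s)"
  proof
    fix s assume "s \<in> T"
    then obtain g where g: "g \<in> set gs" "s = g [^]\<^bsub>G\<^esub> k" unfolding T_def by blast
    show "s = \<one>\<^bsub>G\<^esub> \<or> (\<exists>w\<in>W. word_eval G a w = s)"
    proof (cases "g \<in> Inf")
      case True
      then have "wg g [^]\<^bsub>freegrp n\<^esub> k \<in> W" unfolding W_def by blast
      then show ?thesis using evW[OF True] g by blast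
    next
      case False
      then show ?thesis using finord g by simp
    qed
  qed
  have FP: "fin_pres (G Mod H) n (\<lambda>i. H #>\<^bsub>G\<^esub> a i) (R \<union> W)"
    by (rule quot_pres[OF G P H_def TC Wfin WC W0 WT TW])
  have HN: "H \<lhd> G" unfolding H_def by (rule G.normal_closure_normal[OF TC])
  interpret N: normal H G by (rule HN)
  define a' where "a' = (\<lambda>i. H #>\<^bsub>G\<^esub> a i)"
  define eQ where "eQ x = group.ord ((G Mod H) Mod fin_res (G Mod H))
                 (fin_res (G Mod H) #>\<^bsub>G Mod H\<^esub> (H #>\<^bsub>G\<^esub> x))" for x
  have eQM: "x [^]\<^bsub>G\<^esub> eQ x \<in> M" if "x \<in> carrier G" for x
    unfolding eQ_def by (rule N.ord_bound[OF M(1,2) HM that])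
  define cQ where "cQ r = (let kk = group.ord ((G Mod H) Mod fin_res (G Mod H))
       (fin_res (G Mod H) #>\<^bsub>G Mod H\<^esub> word_eval (G Mod H) a' (froot n r))
       in if kk = 0 then 0 else 1 / real kk)" for r
  define cG where "cG r = (let kk = group.ord (G Mod fin_res G)
       (fin_res G #>\<^bsub>G\<^esub> word_eval G a (froot n r))
       in if kk = 0 then 0 else 1 / real kk)" for r
  have rpQ: "rdef_pres (G Mod H) n a' (R \<union> W) = real n - sum cQ (R \<union> W)"
    unfolding rdef_pres_def cQ_def by (rule refl)
  have rpG: "rdef_pres G n a R = real n - sum cG R"
    unfolding rdef_pres_def cG_def by (rule refl)
  have cQ_eq: "cQ r = (if eQ (word_eval G a (froot n r)) = 0 then 0 else 1 / real (eQ (word_eval G a (froot n r))))"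
    if r: "r \<in> carrier (freegrp n)" "r \<noteq> []" for r
  proof -
    have fc: "froot n r \<in> carrier (freegrp n)" using froot_props[OF r] by blast
    have "word_eval (G Mod H) a' (froot n r) = H #>\<^bsub>G\<^esub> word_eval G a (froot n r)"
      unfolding a'_def using N.word_eval_Mod[OF aC] fc by (simp add: carrier_freegrp)
    then show ?thesis unfolding cQ_def eQ_def Let_def by simp
  qed
  have cQ_nonneg: "cQ r \<ge> 0" for r unfolding cQ_def Let_def by simp
  have cG_eq: "cG r = 1 / real (d r)" if r: "r \<in> R" for r
  proof -
    have "group.ord (G Mod {\<one>\<^bsub>G\<^esub>}) ({\<one>\<^bsub>G\<^esub>} #>\<^bsub>G\<^esub> word_eval G a (u r)) = d r"
      unfolding d_def by (rule G.ord_Mod_triv[OF uC[OF r]])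
    then show ?thesis using dpos[OF r] unfolding cG_def Let_def rf u_def by simp
  qed
  have cR: "cQ r \<le> cG r" if r: "r \<in> R" for r
  proof -
    have rc: "r \<in> carrier (freegrp n)" "r \<noteq> []" using r R by auto
    define x where "x = word_eval G a (u r)"
    have xc: "x \<in> carrier G" unfolding x_def using uC[OF r] .
    define e where "e = eQ x"
    have ce: "cQ r = (if e = 0 then 0 else 1 / real e)"
      using cQ_eq[OF rc] unfolding e_def x_def u_def by simp
    show ?thesis
    proof (cases "e = 0")
      case True then show ?thesis using ce cG_eq[OF r] by simp
    next
      case False
      have xe: "x [^]\<^bsub>G\<^esub> e \<in> M" unfolding e_def by (rule eQM[OF xc])
      have "\<not> e < d r"
      proof
        assume "e < d r"
        then have "e \<in> {1..<d r}" using False by simp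
        then have "x [^]\<^bsub>G\<^esub> e \<in> (\<lambda>j::nat. word_eval G a (u r) [^]\<^bsub>G\<^esub> j) ` {1..<d r}"
          unfolding x_def by (rule imageI)
        then have "x [^]\<^bsub>G\<^esub> e \<in> S" unfolding S_def using r by blast
        then show False using xe M(3) by blast
      qed
      then have "d r \<le> e" by simp
      then have "1 / real e \<le> 1 / real (d r)" using dpos[OF r] by (simp add: frac_le)
      then show ?thesis using ce cG_eq[OF r] False by simp
    qed
  qed
  have cW: "cQ w \<le> 1 / real N" if w: "w \<in> W" for w
  proof -
    obtain g where g: "g \<in> Inf" "w = wg g [^]\<^bsub>freegrp n\<^esub> k" using w unfolding W_def by blast
    have gc: "g \<in> carrier G" using Infc[OF g(1)] .
    have wgc: "wg g \<in> carrier (freegrp n)" and wge: "word_eval G a (wg g) = g" using wg[OF gc] by auto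
    have wc: "w \<in> carrier (freegrp n)" "w \<noteq> []" using w WC W0 by auto
    obtain q :: nat where q: "q \<ge> 1" "wg g = froot n w [^]\<^bsub>freegrp n\<^esub> q"
      using froot_power[OF wgc k1] wc g(2) by blast
    have fc: "froot n w \<in> carrier (freegrp n)" using froot_props[OF wc] by blast
    define x where "x = word_eval G a (froot n w)"
    have xc: "x \<in> carrier G" unfolding x_def using fc by simp
    have gx: "g = x [^]\<^bsub>G\<^esub> q" unfolding x_def using wge q(2) phi.hom_nat_pow[OF fc, of q] by simp
    define e where "e = eQ x"
    have ce: "cQ w = (if e = 0 then 0 else 1 / real e)"
      using cQ_eq[OF wc] unfolding e_def x_def by simp
    show ?thesis
    proof (cases "e = 0")
      case True then show ?thesis using ce by simp
    next
      case False
      have xe: "x [^]\<^bsub>G\<^esub> e \<in> M" unfolding e_def by (rule eQM[OF xc])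
      have "g [^]\<^bsub>G\<^esub> e = (x [^]\<^bsub>G\<^esub> e) [^]\<^bsub>G\<^esub> q"
        using gx G.nat_pow_pow[OF xc, of q e] G.nat_pow_pow[OF xc, of e q] by (simp add: mult.commute)
      also have "\<dots> \<in> M" by (rule G.sub_pow_closed[OF M(1) xe])
      finally have ge: "g [^]\<^bsub>G\<^esub> e \<in> M" .
      have "\<not> e < N"
      proof
        assume "e < N"
        then have "e \<in> {1..<N}" using False by simp
        then have "g [^]\<^bsub>G\<^esub> e \<in> (\<lambda>j::nat. g [^]\<^bsub>G\<^esub> j) ` {1..<N}" by (rule imageI)
        then have "g [^]\<^bsub>G\<^esub> e \<in> S" unfolding S_def using g(1) by blast
        then show False using ge M(3) by blast
      qed
      then have "N \<le> e" by simp
      then have "1 / real e \<le> 1 / real N" using N by (simp add: frac_le)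
      then show ?thesis using ce False by simp
    qed
  qed
  have sumU: "sum cQ (R \<union> W) \<le> sum cQ R + sum cQ W"
  proof -
    have "sum cQ (R \<union> W) = sum cQ R + sum cQ W - sum cQ (R \<inter> W)"
      by (rule sum_Un[OF R(1) Wfin])
    moreover have "sum cQ (R \<inter> W) \<ge> 0" by (rule sum_nonneg) (rule cQ_nonneg)
    ultimately show ?thesis by simp
  qed
  have sumR: "sum cQ R \<le> sum cG R" by (rule sum_mono) (rule cR)
  have sumW: "sum cQ W \<le> real (card W) * (1 / real N)" by (rule sum_bounded_above) (rule cW)
  have cardW: "card W \<le> length gs"
  proof -
    have "card W \<le> card Inf" unfolding W_def by (rule card_image_le) (simp add: Inf_def)
    also have "\<dots> \<le> card (set gs)" unfolding Inf_def by (rule card_mono) auto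
    also have "\<dots> \<le> length gs" by (rule card_length)
    finally show ?thesis .
  qed
  have "real (card W) * (1 / real N) \<le> real (length gs) / real N"
    using cardW N by (simp add: divide_right_mono)
  then have "rdef_pres (G Mod H) n a' (R \<union> W) \<ge> rdef_pres G n a R - real (length gs) / real N"
    using rpQ rpG sumU sumR sumW by linarith
  then have gt1: "1 < rdef_pres (G Mod H) n a' (R \<union> W)" using small by linarith
  have FP': "fin_pres (G Mod H) n a' (R \<union> W)" using FP unfolding a'_def .
  have "ereal (rdef_pres (G Mod H) n a' (R \<union> W)) \<le> rdef (G Mod H)"
  proof -
    have mem: "(n, a', R \<union> W) \<in> {(n, a, R). fin_pres (G Mod H) n a R}" using FP' by simp
    have "ereal (case (n, a', R \<union> W) of (n, a, R) \<Rightarrow> rdef_pres (G Mod H) n a R)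
          \<le> (SUP p \<in> {(n, a, R). fin_pres (G Mod H) n a R}.
               ereal (case p of (n, a, R) \<Rightarrow> rdef_pres (G Mod H) n a R))"
      by (rule SUP_upper[OF mem])
    then show ?thesis unfolding rdef_def by simp
  qed
  moreover have "(1::ereal) < ereal (rdef_pres (G Mod H) n a' (R \<union> W))" using gt1 by simp
  ultimately have "1 < rdef (G Mod H)" by (meson less_le_trans)
  then show ?thesis using kN unfolding H_def T_def by blast
qed


theorem mainTheorem18:
  fixes G :: "('g, 'b) monoid_scheme" and gs :: "'g list"
  assumes "group G"
    and "finitely_presented G"
    and "residually_finite G"
    and "set gs \<subseteq> carrier G"
    and "\<forall>g\<in>set gs. g \<noteq> \<one>\<^bsub>G\<^esub>"
    and "rdef G > 1"
  shows "infinite {k::nat. rdef (G Mod normal_closure G ((\<lambda>g. g [^]\<^bsub>G\<^esub> k) ` set gs)) > 1}"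
proof -
  obtain p where p: "p \<in> {(n, a, R). fin_pres G n a R}"
      "1 < ereal (case p of (n, a, R) \<Rightarrow> rdef_pres G n a R)"
    using assms(6) unfolding rdef_def less_SUP_iff by blast
  obtain n a R where pp: "p = (n, a, R)" by (cases p) auto
  have P: "fin_pres G n a R" using p(1) pp by simp
  have gt: "1 < rdef_pres G n a R" using p(2) pp by simp
  define \<epsilon> where "\<epsilon> = rdef_pres G n a R - 1"
  have \<epsilon>: "\<epsilon> > 0" using gt unfolding \<epsilon>_def by simp
  have rf: "fin_res G = {\<one>\<^bsub>G\<^esub>}" using assms(3) unfolding residually_finite_def .
  show ?thesis
    unfolding infinite_nat_iff_unbounded_le
  proof
    fix m0 :: nat
    define N where "N = Suc (max m0 (nat \<lceil>real (length gs) / \<epsilon>\<rceil>))"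
    have N1: "N \<ge> 1" unfolding N_def by simp
    have "real (length gs) / \<epsilon> < real N"
    proof -
      have "real (length gs) / \<epsilon> \<le> real (nat \<lceil>real (length gs) / \<epsilon>\<rceil>)" by linarith
      also have "\<dots> < real N" unfolding N_def by simp
      finally show ?thesis .
    qed
    then have "real (length gs) < real N * \<epsilon>" using \<epsilon> by (simp add: divide_less_eq)
    then have small: "real (length gs) / real N < rdef_pres G n a R - 1"
      using N1 unfolding \<epsilon>_def by (simp add: divide_less_eq mult.commute)
    obtain k where k: "k \<ge> N" "1 < rdef (G Mod normal_closure G ((\<lambda>g. g [^]\<^bsub>G\<^esub> k) ` set gs))"
      using step[OF assms(1) rf assms(4) P N1 small] by blast
    have "k \<ge> m0" using k(1) unfolding N_def by simp
    then show "\<exists>k\<ge>m0. k \<in> {k::nat. rdef (G Mod normal_closure G ((\<lambda>g. g [^]\<^bsub>G\<^esub> k) ` set gs)) > 1}"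
      using k(2) by blast
  qed
qed


end
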